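(* Let $r\in\mathbb{N}_0$, $m\in\mathbb{N}$ with $m\ge r+1$, $k:=m-r$, and let $x_0\le x_1\le\dots\le x_m$ be real numbers with $x_j<x_{j+r+1}$ for all $0\le j\le m-r-1$; put $d:=2(x_m-x_0)$. Let $(p,q)\in\mathcal{Q}_{m,r}$ satisfy $q-p+2\le m$. If $\varphi,\omega\in\Phi$ satisfy \[ \varphi(t)\le t^{k-1}\int_t^{d}u^{-k}\omega(u)\,du,\qquad t\in(0,d/2], \] then \[ \Lambda_{p,q,r}(x_0,\dots,x_m;\varphi)\le 2^{k^2}\Lambda_r(x_0,\dots,x_m;\omega). \]
   Context: $\Phi$ denotes the set of nondecreasing functions $\varphi\in C[0,\infty]$ with $\varphi(0)=0$. For ordered $y_0\le\dots\le y_n$: $\mathcal{Q}_{n,r}:=\{(p,q):0\le p,q\le n,\ q-p\ge r+1\}$, $y_{-1}:=y_0-(y_n-y_0)$, $y_{n+1}:=y_n+(y_n-y_0)$, $d(p,q):=\min\{y_{q+1}-y_p,y_q-y_{p-1}\}$, and for $\varphi\in\Phi$, $\Lambda_{p,q,r}(y_0,\dots,y_n;\varphi):=\frac{\int_{y_q-y_p}^{d(p,q)}u^{p+r-q-1}\varphi(u)du}{\prod_{i=0}^{p-1}(y_q-y_i)\prod_{i=q+1}^{n}(y_i-y_p)}$ (empty products $=1$), $\Lambda_r(y_0,\dots,y_n;\varphi):=\max_{(p,q)\in\mathcal{Q}_{n,r}}\Lambda_{p,q,r}(y_0,\dots,y_n;\varphi)$. *)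

theory Defs
  imports "HOL-Analysis.Analysis"
begin

definition Phi :: "(real \<Rightarrow> real) set" where
  "Phi = {\<phi>. mono_on {0..} \<phi> \<and> continuous_on {0..} \<phi> \<and> \<phi> 0 = 0}"

definition Qset :: "nat \<Rightarrow> nat \<Rightarrow> (nat \<times> nat) set" where
  "Qset n r = {(p, q). p \<le> n \<and> q \<le> n \<and> q \<ge> p + r + 1}"

definition yprev :: "(nat \<Rightarrow> real) \<Rightarrow> nat \<Rightarrow> nat \<Rightarrow> real" where
  "yprev y n p = (if p = 0 then y 0 - (y n - y 0) else y (p - 1))"

definition ynext :: "(nat \<Rightarrow> real) \<Rightarrow> nat \<Rightarrow> nat \<Rightarrow> real" where
  "ynext y n q = (if q \<ge> n then y n + (y n - y 0) else y (q + 1))"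

definition dpq :: "(nat \<Rightarrow> real) \<Rightarrow> nat \<Rightarrow> nat \<Rightarrow> nat \<Rightarrow> real" where
  "dpq y n p q = min (ynext y n q - y p) (y q - yprev y n p)"

definition Lambda_pqr ::
  "nat \<Rightarrow> nat \<Rightarrow> nat \<Rightarrow> (nat \<Rightarrow> real) \<Rightarrow> nat \<Rightarrow> (real \<Rightarrow> real) \<Rightarrow> real" where
  "Lambda_pqr p q r y n \<phi> =
     integral {y q - y p .. dpq y n p q}
       (\<lambda>u. u powi (int p + int r - int q - 1) * \<phi> u)
     / ((\<Prod>i<p. (y q - y i)) * (\<Prod>i\<in>{q+1..n}. (y i - y p)))"

definition Lambda_r :: "nat \<Rightarrow> (nat \<Rightarrow> real) \<Rightarrow> nat \<Rightarrow> (real \<Rightarrow> real) \<Rightarrow> real" where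
  "Lambda_r r y n \<phi> = Max ((\<lambda>(p, q). Lambda_pqr p q r y n \<phi>) ` Qset n r)"

end

theory Submission
  imports Defs
begin

lemma Phi_nonneg: "\<psi> \<in> Phi \<Longrightarrow> 0 \<le> t \<Longrightarrow> 0 \<le> \<psi> t"
  unfolding Phi_def by (auto simp: mono_on_def) (metis atLeast_iff order_refl)

lemma Phi_cont: "\<psi> \<in> Phi \<Longrightarrow> S \<subseteq> {0..} \<Longrightarrow> continuous_on S \<psi>"
  unfolding Phi_def by (auto intro: continuous_on_subset)

lemma cont_div_pow:
  fixes \<omega> :: "real \<Rightarrow> real"
  assumes "continuous_on S \<omega>" "\<And>v. v \<in> S \<Longrightarrow> 0 < v"
  shows "continuous_on S (\<lambda>v. \<omega> v / v ^ n)"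
  using assms by (auto intro!: continuous_intros dest: assms(2))

lemma ftc_bound:
  fixes \<omega> :: "real \<Rightarrow> real" and a D d :: real and e N :: nat
  assumes a: "0 < a" "a \<le> D" "D \<le> d" and e: "e \<ge> 1"
    and cont: "continuous_on {a..d} \<omega>" and nn: "\<And>t. t \<in> {a..d} \<Longrightarrow> 0 \<le> \<omega> t"
  shows "(\<lambda>u. u^(e-1) * integral {u..d} (\<lambda>v. \<omega> v / v^(N+e))) integrable_on {a..D} \<and>
    integral {a..D} (\<lambda>u. u^(e-1) * integral {u..d} (\<lambda>v. \<omega> v / v^(N+e)))
      \<le> D^e * integral {D..d} (\<lambda>v. \<omega> v / v^(N+e)) + integral {a..D} (\<lambda>v. \<omega> v / v^N)"
proof -
  define h where "h = (\<lambda>v. \<omega> v / v^(N+e))"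
  define g where "g = (\<lambda>v. \<omega> v / v^N)"
  have hc: "continuous_on {a..d} h" unfolding h_def
    by (rule cont_div_pow[OF cont]) (use a in auto)
  have gc: "continuous_on {a..D} g" unfolding g_def
    by (rule cont_div_pow) (use a cont in \<open>auto intro: continuous_on_subset\<close>)
  have hi: "h integrable_on {a..d}" by (rule integrable_continuous_interval[OF hc])
  define C0 where "C0 = integral {a..d} h"
  define Ia where "Ia = (\<lambda>u. integral {a..u} h)"
  define Iw where "Iw = (\<lambda>u. integral {a..u} g)"
  have split: "integral {u..d} h = C0 - Ia u" if "u \<in> {a..d}" for u
    using Henstock_Kurzweil_Integration.integral_combine[OF _ _ hi, of u] that unfolding C0_def Ia_def by auto
  define G where "G = (\<lambda>u. u^e * (C0 - Ia u) + Iw u)"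
  define G' where "G' = (\<lambda>u. real e * u^(e-1) * (C0 - Ia u))"
  have der: "(G has_vector_derivative G' u) (at u within {a..D})" if u: "u \<in> {a..D}" for u
  proof -
    have d1: "(Ia has_field_derivative h u) (at u within {a..D})"
    proof -
      have "(Ia has_vector_derivative h u) (at u within {a..d})"
        unfolding Ia_def by (rule integral_has_vector_derivative[OF hc]) (use u a in auto)
      then have "(Ia has_vector_derivative h u) (at u within {a..D})"
        by (rule has_vector_derivative_within_subset) (use a in auto)
      then show ?thesis by (simp add: has_real_derivative_iff_has_vector_derivative)
    qed
    have d2: "(Iw has_field_derivative g u) (at u within {a..D})"
      unfolding Iw_def has_real_derivative_iff_has_vector_derivative
      by (rule integral_has_vector_derivative[OF gc u])
    have "(G has_field_derivative
        (real e * u^(e-1) * (C0 - Ia u) + u^e * (- h u) + g u)) (at u within {a..D})"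
      unfolding G_def
      by (auto intro!: derivative_eq_intros d1 d2 simp: algebra_simps)
    moreover have "u^e * h u = g u"
    proof -
      have "u > 0" using u a by auto
      then show ?thesis unfolding h_def g_def by (simp add: power_add field_simps)
    qed
    ultimately have "(G has_field_derivative G' u) (at u within {a..D})"
      unfolding G'_def by (simp add: algebra_simps)
    then show ?thesis by (simp add: has_real_derivative_iff_has_vector_derivative)
  qed
  have ftc: "(G' has_integral (G D - G a)) {a..D}"
    by (rule fundamental_theorem_of_calculus[OF a(2) der])
  define f where "f = (\<lambda>u. u^(e-1) * integral {u..d} h)"
  have feq: "f u = (1 / real e) * G' u" if "u \<in> {a..D}" for u
    using split[of u] that a e unfolding f_def G'_def by auto
  have fint: "(f has_integral ((1/real e) * (G D - G a))) {a..D}"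
    using has_integral_mult_right[OF ftc, of "1/real e"] has_integral_cong[of "{a..D}" f] feq
    by (metis (no_types, lifting))
  have fnn: "0 \<le> f u" if "u \<in> {a..D}" for u
  proof -
    have "0 \<le> integral {u..d} h"
      by (rule integral_nonneg) (use that a hc nn in \<open>auto simp: h_def intro!: integrable_continuous_interval
          intro: continuous_on_subset\<close>)
    then show ?thesis unfolding f_def using that a by auto
  qed
  have "0 \<le> (1/real e) * (G D - G a)"
    using has_integral_nonneg[OF fint] fnn by auto
  then have GG: "0 \<le> G D - G a" using e by (auto simp: zero_le_divide_iff)
  have C0nn: "0 \<le> C0" unfolding C0_def
    by (rule integral_nonneg[OF hi]) (use nn a in \<open>auto simp: h_def\<close>)
  have "G D - G a = D^e * integral {D..d} h + Iw D - a^e * C0"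
    using split[of D] a unfolding G_def Ia_def Iw_def by auto
  moreover have "0 \<le> a^e * C0" using C0nn a by auto
  ultimately have "(1/real e) * (G D - G a) \<le> D^e * integral {D..d} h + Iw D"
    using GG e by (smt (verit, best) divide_le_eq_1 le_divide_eq_1 mult_cancel_right1 mult_le_cancel_right1 of_nat_1 of_nat_le_iff times_divide_eq_left)
  then show ?thesis using fint unfolding f_def h_def Iw_def g_def
    by (auto simp: integral_unique has_integral_integrable)
qed


definition Pd :: "(nat \<Rightarrow> real) \<Rightarrow> nat \<Rightarrow> nat \<Rightarrow> nat \<Rightarrow> real" where
  "Pd x m p q = (\<Prod>i<p. (x q - x i)) * (\<Prod>i\<in>{q+1..m}. (x i - x p))"

locale cfg =
  fixes r m :: nat and x :: "nat \<Rightarrow> real"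
  assumes mr: "m \<ge> r + 1"
    and mono: "\<And>i j. i \<le> j \<Longrightarrow> j \<le> m \<Longrightarrow> x i \<le> x j"
    and strict: "\<And>j. j + r + 1 \<le> m \<Longrightarrow> x j < x (j + r + 1)"
begin

lemma lt: "i + r + 1 \<le> j \<Longrightarrow> j \<le> m \<Longrightarrow> x i < x j"
  using strict[of i] mono[of "i+r+1" j] by auto

lemma x0m: "x 0 < x m"
  using lt[of 0 m] mr by auto

lemma Q_lt: "(p,q) \<in> Qset m r \<Longrightarrow> x p < x q"
  unfolding Qset_def using lt by auto

lemma Pd_pos: assumes "(p,q) \<in> Qset m r" shows "0 < Pd x m p q"
proof -
  have "0 < (\<Prod>i<p. (x q - x i))"
    by (rule prod_pos) (use assms lt in \<open>auto simp: Qset_def\<close>)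
  moreover have "0 < (\<Prod>i\<in>{q+1..m}. (x i - x p))"
    by (rule prod_pos) (use assms lt in \<open>auto simp: Qset_def\<close>)
  ultimately show ?thesis unfolding Pd_def by auto
qed

lemma dpq_ge: assumes "(p,q) \<in> Qset m r" shows "x q - x p \<le> dpq x m p q"
proof -
  have qm: "q \<le> m" "p \<le> m" using assms by (auto simp: Qset_def)
  have "x q \<le> ynext x m q"
    unfolding ynext_def using qm mono[of q "q+1"] x0m by auto
  moreover have "yprev x m p \<le> x p"
    unfolding yprev_def using qm mono[of "p-1" p] x0m by auto
  ultimately show ?thesis unfolding dpq_def by auto
qed

lemma Lam_eq:
  assumes "(p,q) \<in> Qset m r"
  shows "Lambda_pqr p q r x m \<psi> =
    integral {x q - x p .. dpq x m p q} (\<lambda>u. \<psi> u / u ^ (q - p - r + 1)) / Pd x m p q"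
proof -
  have e: "int p + int r - int q - 1 = - int (q - p - r + 1)"
    using assms by (auto simp: Qset_def)
  have f: "(\<lambda>u. u powi (int p + int r - int q - 1) * \<psi> u) = (\<lambda>u. \<psi> u / u ^ (q - p - r + 1))"
  proof
    fix u :: real
    show "u powi (int p + int r - int q - 1) * \<psi> u = \<psi> u / u ^ (q - p - r + 1)"
      unfolding e power_int_minus power_int_of_nat by (simp add: divide_inverse mult.commute)
  qed
  show ?thesis unfolding Lambda_pqr_def Pd_def f ..
qed

lemma Lam_nonneg:
  assumes "(p,q) \<in> Qset m r" "\<psi> \<in> Phi"
  shows "0 \<le> Lambda_pqr p q r x m \<psi>"
proof -
  have "0 \<le> integral {x q - x p .. dpq x m p q} (\<lambda>u. \<psi> u / u ^ (q - p - r + 1))"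
  proof (rule integral_nonneg)
    have pos: "0 < x q - x p" using Q_lt[OF assms(1)] by auto
    show "(\<lambda>u. \<psi> u / u ^ (q - p - r + 1)) integrable_on {x q - x p..dpq x m p q}"
      by (rule integrable_continuous_interval, rule cont_div_pow, rule Phi_cont[OF assms(2)])
        (use pos in auto)
    show "0 \<le> \<psi> u / u ^ (q - p - r + 1)" if "u \<in> {x q - x p..dpq x m p q}" for u
      using that pos Phi_nonneg[OF assms(2), of u] by auto
  qed
  then show ?thesis using Lam_eq[OF assms(1)] Pd_pos[OF assms(1)] by auto
qed

lemma finQ: "finite (Qset m r)"
proof -
  have "Qset m r \<subseteq> {..m} \<times> {..m}" by (auto simp: Qset_def)
  then show ?thesis by (rule finite_subset) auto
qed

lemma Lam_le_Max:
  assumes "(p,q) \<in> Qset m r"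
  shows "Lambda_pqr p q r x m \<psi> \<le> Lambda_r r x m \<psi>"
  unfolding Lambda_r_def by (rule Max_ge) (use finQ assms in auto)

end

context cfg begin

lemma cover:
  assumes pq: "(p,q) \<in> Qset m r" "q + 2 \<le> m + p"
    and v: "dpq x m p q \<le> v" "v \<le> 2*(x m - x 0)"
  shows "\<exists>p' q'. p' \<le> p \<and> q \<le> q' \<and> q' \<le> m \<and> (p',q') \<noteq> (p,q) \<and> x q' - x p' \<le> v \<and> v \<le> dpq x m p' q'"
proof -
  define S where "S = (\<lambda>y::nat\<times>nat. fst y \<le> p \<and> q \<le> snd y \<and> snd y \<le> m \<and> x (snd y) - x (fst y) \<le> v)"
  have qm: "q \<le> m" "p + r + 1 \<le> q" using pq by (auto simp: Qset_def)
  have "S (p,q)" using dpq_ge[OF pq(1)] v qm unfolding S_def by auto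
  moreover have "\<forall>y. S y \<longrightarrow> (\<lambda>y. snd y - fst y) y < m + 1" unfolding S_def by auto
  ultimately obtain y where y: "S y" and ymax: "\<And>z. S z \<Longrightarrow> snd z - fst z \<le> snd y - fst y"
    using Lattices_Big.ex_has_greatest_nat[of S "(p,q)" "\<lambda>y. snd y - fst y" "m+1"] by blast
  obtain p0 q0 where y0: "y = (p0,q0)" by (cases y)
  have h: "p0 \<le> p" "q \<le> q0" "q0 \<le> m" "x q0 - x p0 \<le> v" using y y0 S_def by auto
  have A: "x (q0+1) - x p0 > v" if "q0 < m"
  proof (rule ccontr)
    assume "\<not> ?thesis"
    then have "S (p0, q0+1)" using h that unfolding S_def by auto
    from ymax[OF this] have "q0 + 1 - p0 \<le> q0 - p0" using y0 by auto
    then show False using h qm by auto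
  qed
  have B: "x q0 - x (p0-1) > v" if "p0 > 0"
  proof (rule ccontr)
    assume "\<not> ?thesis"
    then have "S (p0-1, q0)" using h that unfolding S_def by auto
    from ymax[OF this] have "q0 - (p0 - 1) \<le> q0 - p0" using y0 by auto
    then show False using h qm that by auto
  qed
  define A' where "A' = ynext x m q0 - x p0"
  define B' where "B' = x q0 - yprev x m p0"
  have dd: "dpq x m p0 q0 = min A' B'" unfolding dpq_def A'_def B'_def ..
  have x0q0: "x 0 \<le> x q0" "x 0 \<le> x p0" "x p0 \<le> x m" "x q0 \<le> x m"
    using mono h qm by auto
  have key: "v < dpq x m p0 q0 \<or> (p0 = 0 \<and> q0 = m)"
  proof (cases "q0 < m")
    case True
    then have Av: "A' > v" using A unfolding A'_def ynext_def by auto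
    moreover have "B' > v"
    proof (cases "p0 > 0")
      case True then show ?thesis using B unfolding B'_def yprev_def by auto
    next
      case False
      then have "B' = x q0 - x 0 + (x m - x 0)" unfolding B'_def yprev_def by auto
      moreover have "x (q0+1) \<le> x m" using mono True by auto
      ultimately have "B' \<ge> A'" unfolding A'_def ynext_def using True False x0q0 by auto
      then show ?thesis using Av by auto
    qed
    ultimately show ?thesis using dd by auto
  next
    case False
    then have q0m: "q0 = m" using h by auto
    show ?thesis
    proof (cases "p0 > 0")
      case True
      then have Bv: "B' > v" using B unfolding B'_def yprev_def by auto
      moreover have "x 0 \<le> x (p0 - 1)" using mono[of 0 "p0-1"] h qm by auto
      ultimately have "A' \<ge> B'" unfolding A'_def B'_def ynext_def yprev_def
        using q0m True x0q0 by auto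
      then show ?thesis using Bv dd by auto
    next
      case False then show ?thesis using q0m by auto
    qed
  qed
  have vle: "v \<le> dpq x m p0 q0"
  proof (cases "p0 = 0 \<and> q0 = m")
    case True
    then show ?thesis using v unfolding dpq_def ynext_def yprev_def by auto
  qed (use key in auto)
  have ne: "(p0,q0) \<noteq> (p,q)"
  proof
    assume "(p0,q0) = (p,q)"
    then show False using key v pq(2) qm by auto
  qed
  show ?thesis using h vle ne by blast
qed

end

context cfg begin

lemma pointwise:
  assumes pq: "(p,q) \<in> Qset m r" "q + 2 \<le> m + p"
    and pq': "p' \<le> p" "q \<le> q'" "q' \<le> m" "(p',q') \<noteq> (p,q)"
    and v: "x q' - x p' \<le> v" "dpq x m p q \<le> v" "v \<le> 2*(x m - x 0)"
  shows "(dpq x m p q)^(m - (q-p) - 1) * v^(q'-p'-r+1) * Pd x m p' q'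
           \<le> 2^(m-r) * Pd x m p q * v^(m-r)"
proof -
  define D where "D = dpq x m p q"
  define L where "L = x q' - x p'"
  define e where "e = m - (q-p) - 1"
  define N' where "N' = q'-p'-r+1"
  define k where "k = m - r"
  define c where "c = p' + (m - q')"
  define j where "j = (p - p') + (q' - q)"
  have qm: "p + r + 1 \<le> q" "q \<le> m" using pq by (auto simp: Qset_def)
  have j1: "j \<ge> 1" using pq' unfolding j_def by auto
  have ar: "c + j = e + 1" "e \<ge> 1" "N' + c = k + 1" "c + 1 \<le> k" "k \<ge> 2"
    using qm pq pq' j1 unfolding c_def j_def e_def N'_def k_def by auto
  have a_pos: "0 < x q - x p" using Q_lt[OF pq(1)] by auto
  have Dge: "x q - x p \<le> D" using dpq_ge[OF pq(1)] unfolding D_def .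
  have Dpos: "0 < D" using a_pos Dge by auto
  have f1: "D \<le> x q - x i" if "i < p" for i
  proof -
    have "D \<le> x q - x (p-1)" unfolding D_def dpq_def yprev_def using that by auto
    moreover have "x i \<le> x (p-1)" using mono[of i "p-1"] that qm by auto
    ultimately show ?thesis by auto
  qed
  have f2: "D \<le> x i - x p" if "q < i" "i \<le> m" for i
  proof -
    have "D \<le> x (q+1) - x p" unfolding D_def dpq_def ynext_def using that by auto
    moreover have "x (q+1) \<le> x i" using mono[of "q+1" i] that by auto
    ultimately show ?thesis by auto
  qed
  have xpp: "x p' \<le> x p" "x q \<le> x q'" "x p \<le> x q" "x p' \<le> x q" "x p \<le> x q'"
    using mono pq' qm by auto
  have LD: "D \<le> L"
  proof (cases "p' < p")
    case True
    then show ?thesis using f1[of p'] xpp unfolding L_def by auto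
  next
    case False
    then have "q < q'" using pq' by auto
    then show ?thesis using f2[of q'] xpp pq' False unfolding L_def by auto
  qed
  have Lpos: "0 < L" using LD Dpos by auto
  define C1 where "C1 = (\<Prod>i<p'. (x q - x i))"
  define A1 where "A1 = (\<Prod>i\<in>{p'..<p}. (x q - x i))"
  define A2 where "A2 = (\<Prod>i\<in>{q+1..q'}. (x i - x p))"
  define C2 where "C2 = (\<Prod>i\<in>{q'+1..m}. (x i - x p))"
  define G1 where "G1 = (\<Prod>i<p'. (x q' - x i))"
  define G2 where "G2 = (\<Prod>i\<in>{q'+1..m}. (x i - x p'))"
  have P: "Pd x m p q = (C1 * A1) * (A2 * C2)"
  proof -
    have s1: "{..<p} = {..<p'} \<union> {p'..<p}" using pq' by auto
    have s2: "{q+1..m} = {q+1..q'} \<union> {q'+1..m}" using pq' by auto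
    have "(\<Prod>i<p. (x q - x i)) = C1 * A1"
      unfolding C1_def A1_def s1 by (rule prod.union_disjoint) auto
    moreover have "(\<Prod>i\<in>{q+1..m}. (x i - x p)) = A2 * C2"
      unfolding A2_def C2_def s2 by (rule prod.union_disjoint) auto
    ultimately show ?thesis unfolding Pd_def by simp
  qed
  have P': "Pd x m p' q' = G1 * G2" unfolding Pd_def G1_def G2_def ..
  have C1nn: "0 \<le> C1" unfolding C1_def
  proof (rule prod_nonneg)
    fix i assume "i \<in> {..<p'}"
    then have "i < p" using pq' by auto
    then show "0 \<le> x q - x i" using f1[of i] Dpos by auto
  qed
  have C2nn: "0 \<le> C2" unfolding C2_def
  proof (rule prod_nonneg)
    fix i assume "i \<in> {q'+1..m}"
    then have "q < i" "i \<le> m" using pq' by auto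
    then show "0 \<le> x i - x p" using f2[of i] Dpos by auto
  qed
  have A1nn: "0 \<le> A1" unfolding A1_def
  proof (rule prod_nonneg)
    fix i assume "i \<in> {p'..<p}"
    then have "i < p" using pq' by auto
    then show "0 \<le> x q - x i" using f1[of i] Dpos by auto
  qed
  have A2nn: "0 \<le> A2" unfolding A2_def
  proof (rule prod_nonneg)
    fix i assume "i \<in> {q+1..q'}"
    then have "q < i" "i \<le> m" using pq' by auto
    then show "0 \<le> x i - x p" using f2[of i] Dpos by auto
  qed
  have G1nn: "0 \<le> G1" unfolding G1_def
  proof (rule prod_nonneg)
    fix i assume "i \<in> {..<p'}"
    then have "i < p" using pq' by auto
    then show "0 \<le> x q' - x i" using f1[of i] Dpos xpp by auto
  qed
  have G2nn: "0 \<le> G2" unfolding G2_def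
  proof (rule prod_nonneg)
    fix i assume "i \<in> {q'+1..m}"
    then have "q < i" "i \<le> m" using pq' by auto
    then show "0 \<le> x i - x p'" using f2[of i] Dpos xpp by auto
  qed
  have G1b: "D^p' * G1 \<le> (2*L)^p' * C1"
  proof -
    have "D^p' * G1 = (\<Prod>i<p'. D * (x q' - x i))" by (simp add: prod.distrib G1_def)
    also have "\<dots> \<le> (\<Prod>i<p'. 2*L*(x q - x i))"
    proof (rule prod_mono)
      fix i assume "i \<in> {..<p'}"
      then have i: "i < p" using pq' by auto
      define f where "f = x q - x i"
      define t where "t = x q' - x q"
      have ff: "D \<le> f" using f1[OF i] f_def by auto
      have tt: "0 \<le> t" "t \<le> L" using xpp unfolding t_def L_def by auto
      have "D * f \<le> L * f" using LD ff Dpos by (intro mult_right_mono) auto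
      moreover have "D * t \<le> f * L" using ff tt Dpos by (intro mult_mono) auto
      moreover have "x q' - x i = f + t" unfolding f_def t_def by auto
      moreover have "D * (x q' - x i) = D*f + D*t" unfolding f_def t_def by (simp add: algebra_simps)
      moreover have "2 * L * (x q - x i) = 2 * (L * f)" unfolding f_def by (simp add: algebra_simps)
      moreover have "0 \<le> D * f" "0 \<le> D * t" using Dpos ff tt by auto
      ultimately show "0 \<le> D * (x q' - x i) \<and> D * (x q' - x i) \<le> 2 * L * (x q - x i)"
        by (simp add: algebra_simps)
    qed
    also have "\<dots> = (2*L)^p' * C1" by (simp add: prod.distrib C1_def)
    finally show ?thesis .
  qed
  have G2b: "D^(m-q') * G2 \<le> (2*L)^(m-q') * C2"
  proof -
    have "D^(m-q') * G2 = (\<Prod>i\<in>{q'+1..m}. D * (x i - x p'))" by (simp add: prod.distrib G2_def)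
    also have "\<dots> \<le> (\<Prod>i\<in>{q'+1..m}. 2*L*(x i - x p))"
    proof (rule prod_mono)
      fix i assume "i \<in> {q'+1..m}"
      then have i: "q < i" "i \<le> m" using pq' by auto
      define f where "f = x i - x p"
      define t where "t = x p - x p'"
      have ff: "D \<le> f" using f2[OF i] f_def by auto
      have tt: "0 \<le> t" "t \<le> L" using xpp unfolding t_def L_def by auto
      have "D * f \<le> L * f" using LD ff Dpos by (intro mult_right_mono) auto
      moreover have "D * t \<le> f * L" using ff tt Dpos by (intro mult_mono) auto
      moreover have "x i - x p' = f + t" unfolding f_def t_def by auto
      moreover have "D * (x i - x p') = D*f + D*t" unfolding f_def t_def by (simp add: algebra_simps)
      moreover have "2 * L * (x i - x p) = 2 * (L * f)" unfolding f_def by (simp add: algebra_simps)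
      moreover have "0 \<le> D * f" "0 \<le> D * t" using Dpos ff tt by auto
      ultimately show "0 \<le> D * (x i - x p') \<and> D * (x i - x p') \<le> 2 * L * (x i - x p)"
        by (simp add: algebra_simps)
    qed
    also have "\<dots> = (2*L)^(m-q') * C2" by (simp add: prod.distrib C2_def)
    finally show ?thesis .
  qed
  have Gb: "D^c * Pd x m p' q' \<le> (2*L)^c * (C1 * C2)"
  proof -
    have "D^c * Pd x m p' q' = (D^p' * G1) * (D^(m-q') * G2)"
      unfolding P' c_def by (simp add: power_add algebra_simps)
    also have "\<dots> \<le> ((2*L)^p' * C1) * ((2*L)^(m-q') * C2)"
      by (rule mult_mono[OF G1b G2b]) (use C1nn Lpos Dpos G2nn in auto)
    also have "\<dots> = (2*L)^c * (C1 * C2)"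
      unfolding c_def by (simp add: power_add algebra_simps)
    finally show ?thesis .
  qed
  have A1ge: "D^(p-p') \<le> A1"
  proof -
    have "(\<Prod>i\<in>{p'..<p}. D) \<le> A1" unfolding A1_def
      by (rule prod_mono) (use f1 Dpos in auto)
    then show ?thesis by simp
  qed
  have A2ge: "D^(q'-q) \<le> A2"
  proof -
    have "(\<Prod>i\<in>{q+1..q'}. D) \<le> A2" unfolding A2_def
      by (rule prod_mono) (use f2 Dpos pq' in auto)
    then show ?thesis by simp
  qed
  have A1b: "D^(p-p') * (x q - x p') \<le> D * A1"
  proof (cases "p' < p")
    case False
    then show ?thesis using Dge pq' unfolding A1_def by auto
  next
    case True
    have s: "{p'..<p} = insert p' {Suc p'..<p}" using True by auto
    have "(\<Prod>i\<in>{Suc p'..<p}. D) \<le> (\<Prod>i\<in>{Suc p'..<p}. (x q - x i))"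
      by (rule prod_mono) (use f1 Dpos in auto)
    then have R: "D^(p - Suc p') \<le> (\<Prod>i\<in>{Suc p'..<p}. (x q - x i))" by simp
    have A1e: "A1 = (x q - x p') * (\<Prod>i\<in>{Suc p'..<p}. (x q - x i))"
      unfolding A1_def s by simp
    have pw: "D^(p-p') = D * D^(p - Suc p')" using True
      by (metis Suc_diff_Suc power_Suc)
    have "0 \<le> x q - x p'" using xpp by auto
    then have "D * (x q - x p') * D^(p - Suc p') \<le> D * (x q - x p') * (\<Prod>i\<in>{Suc p'..<p}. (x q - x i))"
      using R Dpos by (intro mult_left_mono) auto
    then show ?thesis unfolding A1e pw by (simp add: algebra_simps)
  qed
  have A2b: "D^(q'-q) * (x q' - x p) \<le> D * A2"
  proof (cases "q < q'")
    case False
    then show ?thesis using Dge pq' unfolding A2_def by auto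
  next
    case True
    have s: "{q+1..q'} = insert q' {q+1..<q'}" using True by auto
    have "(\<Prod>i\<in>{q+1..<q'}. D) \<le> (\<Prod>i\<in>{q+1..<q'}. (x i - x p))"
      by (rule prod_mono) (use f2 Dpos pq' in auto)
    then have R: "D^(q' - Suc q) \<le> (\<Prod>i\<in>{q+1..<q'}. (x i - x p))" by simp
    have A2e: "A2 = (x q' - x p) * (\<Prod>i\<in>{q+1..<q'}. (x i - x p))"
      unfolding A2_def s by simp
    have pw: "D^(q'-q) = D * D^(q' - Suc q)" using True
      by (metis Suc_diff_Suc power_Suc)
    have "0 \<le> x q' - x p" using xpp by auto
    then have "D * (x q' - x p) * D^(q' - Suc q) \<le> D * (x q' - x p) * (\<Prod>i\<in>{q+1..<q'}. (x i - x p))"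
      using R Dpos by (intro mult_left_mono) auto
    then show ?thesis unfolding A2e pw by (simp add: algebra_simps)
  qed
  have Miss: "D^j * L \<le> 2 * D * (A1 * A2)"
  proof -
    have "D^(p-p') * (x q - x p') * D^(q'-q) \<le> (D * A1) * A2"
      by (rule mult_mono[OF A1b A2ge]) (use Dpos A1nn in auto)
    moreover have "D^(q'-q) * (x q' - x p) * D^(p-p') \<le> (D * A2) * A1"
      by (rule mult_mono[OF A2b A1ge]) (use Dpos A2nn in auto)
    ultimately have "D^(p-p') * D^(q'-q) * ((x q - x p') + (x q' - x p)) \<le> 2 * D * (A1 * A2)"
      by (simp add: algebra_simps)
    moreover have "L \<le> (x q - x p') + (x q' - x p)" unfolding L_def using xpp by auto
    moreover have "0 \<le> D^(p-p') * D^(q'-q)" using Dpos by auto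
    ultimately have "D^(p-p') * D^(q'-q) * L \<le> 2 * D * (A1 * A2)"
      by (meson mult_left_mono order_trans)
    then show ?thesis unfolding j_def by (simp add: power_add)
  qed
  have Miss': "D^(j-1) * L \<le> 2 * (A1 * A2)"
  proof -
    have "D^j = D * D^(j-1)" using j1 by (metis Suc_diff_1 less_le_trans zero_less_one power_Suc)
    then have "D * (D^(j-1) * L) \<le> D * (2 * (A1 * A2))" using Miss by (simp add: algebra_simps)
    then show ?thesis using Dpos by simp
  qed
  have vpos: "0 < v" using v LD Dpos unfolding D_def by auto
  show ?thesis
  proof (cases "c = 0")
    case False
    have ee: "e = (j-1) + c" using ar j1 by auto
    have "D^e * Pd x m p' q' = D^(j-1) * (D^c * Pd x m p' q')" unfolding ee by (simp add: power_add)
    also have "\<dots> \<le> D^(j-1) * ((2*L)^c * (C1 * C2))"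
      using Gb Dpos by (intro mult_left_mono) auto
    also have "\<dots> = 2^c * L^(c-1) * (D^(j-1) * L) * (C1 * C2)"
    proof -
      have "(2*L)^c = 2^c * L^(c-1) * L" using False
        by (metis Suc_diff_1 bot_nat_0.not_eq_extremum power_Suc2 power_mult_distrib mult.assoc)
      then show ?thesis by (simp add: algebra_simps)
    qed
    also have "\<dots> \<le> 2^c * L^(c-1) * (2 * (A1 * A2)) * (C1 * C2)"
      using Miss' Lpos C1nn C2nn by (intro mult_right_mono mult_left_mono) auto
    also have "\<dots> = 2^(c+1) * L^(c-1) * Pd x m p q" unfolding P by (simp add: algebra_simps)
    finally have I1: "D^e * Pd x m p' q' \<le> 2^(c+1) * L^(c-1) * Pd x m p q" .
    have "(2::real)^(c+1) \<le> 2^k" using ar by (intro power_increasing) auto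
    moreover have "L^(c-1) \<le> v^(c-1)" using Lpos v unfolding L_def by (intro power_mono) auto
    moreover have "0 < Pd x m p q" using Pd_pos[OF pq(1)] .
    ultimately have I2: "2^(c+1) * L^(c-1) * Pd x m p q \<le> 2^k * v^(c-1) * Pd x m p q"
      using Lpos by (intro mult_right_mono mult_mono) auto
    have "D^e * v^N' * Pd x m p' q' = v^N' * (D^e * Pd x m p' q')" by (simp add: algebra_simps)
    also have "\<dots> \<le> v^N' * (2^k * v^(c-1) * Pd x m p q)"
      using I1 I2 vpos by (intro mult_left_mono) auto
    also have "\<dots> = 2^k * Pd x m p q * v^k"
    proof -
      have "N' + (c - 1) = k" using ar False by auto
      then have "v^N' * v^(c-1) = v^k" by (metis power_add)
      then show ?thesis by (simp add: algebra_simps)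
    qed
    finally show ?thesis unfolding D_def e_def N'_def k_def .
  next
    case True
    then have p0: "p' = 0" and q0: "q' = m" using pq' unfolding c_def by auto
    have G1: "G1 = 1" "C1 = 1" "G2 = 1" "C2 = 1" unfolding G1_def C1_def G2_def C2_def using p0 q0 by auto
    have ee: "e = j - 1" using ar True by auto
    have NN: "N' = k + 1" using ar True by auto
    have vL: "v \<le> 2 * L" using v unfolding L_def p0 q0 by auto
    have "D^e * v^N' * Pd x m p' q' = (D^(j-1) * v) * v^k" unfolding P' G1 ee NN by (simp add: algebra_simps)
    also have "\<dots> \<le> (D^(j-1) * (2 * L)) * v^k"
      using vL Dpos vpos by (intro mult_right_mono mult_left_mono) auto
    also have "\<dots> \<le> (2 * (2 * (A1 * A2))) * v^k"
    proof -
      have "D^(j-1)*(2*L) \<le> 2*(2*(A1*A2))" using Miss' by linarith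
      then show ?thesis using vpos by (intro mult_right_mono) auto
    qed
    also have "\<dots> \<le> 2^k * Pd x m p q * v^k"
    proof -
      have "(4::real) \<le> 2^k" using ar power_increasing[of 2 k "2::real"] by auto
      then have "4 * (A1 * A2) \<le> 2^k * (A1 * A2)" using A1nn A2nn by (intro mult_right_mono) auto
      then show ?thesis unfolding P G1 using vpos by (intro mult_right_mono) auto
    qed
    finally show ?thesis unfolding D_def e_def N'_def k_def .
  qed
qed

end

lemma arith_k: assumes "3 \<le> k" shows "k^2 * 2^k + 1 \<le> (2::nat)^(k^2)"
proof -
  have sq: "k^2 \<le> 2^(k+1)" using assms
  proof (induction k rule: nat_induct_at_least)
    case base then show ?case by simp
  next
    case (Suc n)
    have "(Suc n)^2 = n^2 + 2*n + 1" by (simp add: power2_eq_square)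
    also have "\<dots> \<le> 2 * n^2"
    proof -
      have "3 * n \<le> n * n" using Suc(1) by (intro mult_right_mono) auto
      then show ?thesis using Suc(1) unfolding power2_eq_square by linarith
    qed
    also have "\<dots> \<le> 2 * 2^(n+1)" using Suc(2) by simp
    finally show ?case by simp
  qed
  have "k^2 * 2^k + 1 \<le> 2^(k+1) * 2^k + 1" using sq by simp
  also have "\<dots> = 2^(2*k+1) + 1" by (simp add: power_add[symmetric])
  also have "\<dots> \<le> 2^(2*k+2)" by simp
  also have "\<dots> \<le> 2^(k^2)"
  proof (rule power_increasing)
    have "3 * k \<le> k * k" using assms by (intro mult_right_mono) auto
    then show "2 * k + 2 \<le> k^2" using assms unfolding power2_eq_square by linarith
  qed auto
  finally show ?thesis .
qed


context cfg begin

lemma D_le: assumes pq: "(p,q) \<in> Qset m r" "q + 2 \<le> m + p"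
  shows "dpq x m p q \<le> x m - x 0"
proof (cases "q < m")
  case True
  then have "dpq x m p q \<le> x (q+1) - x p" unfolding dpq_def ynext_def by auto
  moreover have "x (q+1) \<le> x m" "x 0 \<le> x p" using mono True pq by (auto simp: Qset_def)
  ultimately show ?thesis by auto
next
  case False
  then have q: "q = m" "p \<ge> 2" using pq by (auto simp: Qset_def)
  then have "dpq x m p q \<le> x q - x (p-1)" unfolding dpq_def yprev_def by auto
  moreover have "x 0 \<le> x (p-1)" using mono[of 0 "p-1"] q pq by (auto simp: Qset_def)
  ultimately show ?thesis using q by auto
qed

lemma step4:
  assumes pq: "(p,q) \<in> Qset m r" "q + 2 \<le> m + p" and om: "\<omega> \<in> Phi"
  shows "(dpq x m p q)^(m-(q-p)-1) * integral {dpq x m p q .. 2*(x m - x 0)} (\<lambda>v. \<omega> v / v^(m-r))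
     \<le> real ((m-r)^2) * 2^(m-r) * Pd x m p q * Lambda_r r x m \<omega>"
proof -
  define D where "D = dpq x m p q"
  define d where "d = 2*(x m - x 0)"
  define e where "e = m - (q-p) - 1"
  define k where "k = m - r"
  define P where "P = Pd x m p q"
  define M where "M = Lambda_r r x m \<omega>"
  define h where "h = (\<lambda>v. \<omega> v / v^k)"
  have qm: "p + r + 1 \<le> q" "q \<le> m" using pq by (auto simp: Qset_def)
  have Dpos: "0 < D" using dpq_ge[OF pq(1)] Q_lt[OF pq(1)] unfolding D_def by auto
  have Dd: "D \<le> d" using D_le[OF pq] x0m unfolding D_def d_def by auto
  have Ppos: "0 < P" using Pd_pos[OF pq(1)] unfolding P_def .
  have Mnn: "0 \<le> M" using Lam_nonneg[OF pq(1) om] Lam_le_Max[OF pq(1)] unfolding M_def by (meson order_trans)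
  define T where "T = {(p',q'). p' \<le> p \<and> q \<le> q' \<and> q' \<le> m \<and> (p',q') \<noteq> (p,q)}"
  have TQ: "T \<subseteq> {..p} \<times> {q..m}" unfolding T_def by auto
  have finT: "finite T" by (rule finite_subset[OF TQ]) auto
  have cardT: "card T \<le> k^2"
  proof -
    have "card T \<le> card ({..p} \<times> {q..m})" by (rule card_mono[OF _ TQ]) auto
    also have "\<dots> = (p+1) * (m + 1 - q)" by (simp add: card_cartesian_product)
    also have "\<dots> \<le> k * k" using qm pq(2) unfolding k_def by (intro mult_mono) auto
    finally show ?thesis by (simp add: power2_eq_square)
  qed
  have TQs: "(p',q') \<in> Qset m r" if "(p',q') \<in> T" for p' q'
    using that qm unfolding T_def Qset_def by auto
  define I where "I = (\<lambda>t::nat\<times>nat. {x (snd t) - x (fst t) .. dpq x m (fst t) (snd t)})"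
  define g where "g = (\<lambda>t v. if v \<in> I t then D^e * h v else 0)"
  have hnn: "0 \<le> h v" if "0 < v" for v
    using Phi_nonneg[OF om, of v] that unfolding h_def by auto
  have hcont: "continuous_on S (\<lambda>v. D^e * h v)" if "S \<subseteq> {D..}" for S
    unfolding h_def using that Dpos
    by (intro continuous_intros cont_div_pow Phi_cont[OF om]) force+
  have ptw: "D^e * h v \<le> (\<Sum>t\<in>T. g t v)" if v: "v \<in> {D..d}" for v
  proof -
    obtain p' q' where c: "p' \<le> p" "q \<le> q'" "q' \<le> m" "(p',q') \<noteq> (p,q)"
      "x q' - x p' \<le> v" "v \<le> dpq x m p' q'"
      using cover[OF pq, of v] v unfolding D_def d_def by auto
    have tT: "(p',q') \<in> T" using c unfolding T_def by auto
    have "g (p',q') v = D^e * h v" using c unfolding g_def I_def by auto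
    moreover have "g (p',q') v \<le> (\<Sum>t\<in>T. g t v)"
      by (rule member_le_sum[OF tT _ finT]) (use hnn Dpos v in \<open>auto simp: g_def\<close>)
    ultimately show ?thesis by simp
  qed
  have gint: "g t integrable_on {D..d}" for t
  proof -
    have "(\<lambda>v. D^e * h v) integrable_on (I t \<inter> {D..d})"
      unfolding I_def Int_atLeastAtMost
      by (rule integrable_continuous_interval, rule hcont) auto
    then show ?thesis unfolding g_def by (simp add: integrable_restrict_Int)
  qed
  have pert: "integral (I t \<inter> {D..d}) (\<lambda>v. D^e * h v) \<le> 2^k * P * M" if tT: "t \<in> T" for t
  proof -
    obtain p' q' where t: "t = (p',q')" by (cases t)
    have tQ: "(p',q') \<in> Qset m r" using TQs tT t by auto
    have tc: "p' \<le> p" "q \<le> q'" "q' \<le> m" "(p',q') \<noteq> (p,q)" using tT t unfolding T_def by auto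
    define Nt where "Nt = q' - p' - r + 1"
    define Pt where "Pt = Pd x m p' q'"
    define gt where "gt = (\<lambda>v. \<omega> v / v^Nt)"
    define cc where "cc = 2^k * P / Pt"
    have Ptpos: "0 < Pt" using Pd_pos[OF tQ] unfolding Pt_def .
    have Lpos: "0 < x q' - x p'" using Q_lt[OF tQ] by auto
    have It: "I t = {x q' - x p' .. dpq x m p' q'}" unfolding I_def t by simp
    have gtcont: "continuous_on (I t) gt" unfolding It gt_def
      by (rule cont_div_pow, rule Phi_cont[OF om]) (use Lpos in auto)
    have bnd: "D^e * h v \<le> cc * gt v" if v: "v \<in> I t \<inter> {D..d}" for v
    proof -
      have vv: "x q' - x p' \<le> v" "D \<le> v" "v \<le> d" "v \<le> dpq x m p' q'" using v It by auto
      have vpos: "0 < v" using vv Dpos by auto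
      have pw: "D^e * v^Nt * Pt \<le> 2^k * P * v^k"
        using pointwise[OF pq tc vv(1)] vv unfolding D_def e_def Nt_def Pt_def k_def P_def d_def by auto
      have wnn: "0 \<le> \<omega> v / (v^k * v^Nt * Pt)"
        using Phi_nonneg[OF om, of v] vpos Ptpos by auto
      have "D^e * h v = (D^e * v^Nt * Pt) * (\<omega> v / (v^k * v^Nt * Pt))"
        unfolding h_def using vpos Ptpos by (simp add: field_simps)
      also have "\<dots> \<le> (2^k * P * v^k) * (\<omega> v / (v^k * v^Nt * Pt))"
        by (rule mult_right_mono[OF pw wnn])
      also have "\<dots> = cc * gt v"
        unfolding cc_def gt_def using vpos Ptpos by (simp add: field_simps)
      finally show ?thesis .
    qed
    have ccnn: "0 \<le> cc" unfolding cc_def using Ppos Ptpos by auto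
    have "integral (I t \<inter> {D..d}) (\<lambda>v. D^e * h v) \<le> integral (I t \<inter> {D..d}) (\<lambda>v. cc * gt v)"
    proof (rule integral_le)
      show "(\<lambda>v. D^e * h v) integrable_on I t \<inter> {D..d}"
        unfolding I_def Int_atLeastAtMost
        by (rule integrable_continuous_interval, rule hcont) auto
      show "(\<lambda>v. cc * gt v) integrable_on I t \<inter> {D..d}"
        unfolding It Int_atLeastAtMost
        by (rule integrable_continuous_interval, intro continuous_intros,
            rule continuous_on_subset[OF gtcont]) (auto simp: It)
    qed (rule bnd)
    also have "\<dots> \<le> integral (I t) (\<lambda>v. cc * gt v)"
    proof (rule integral_subset_le)
      show "(\<lambda>v. cc * gt v) integrable_on I t \<inter> {D..d}"
        unfolding It Int_atLeastAtMost
        by (rule integrable_continuous_interval, intro continuous_intros,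
            rule continuous_on_subset[OF gtcont]) (auto simp: It)
      show "(\<lambda>v. cc * gt v) integrable_on I t"
        unfolding It
        by (rule integrable_continuous_interval, intro continuous_intros,
            rule continuous_on_subset[OF gtcont]) (auto simp: It)
      show "\<forall>v\<in>I t. 0 \<le> cc * gt v"
        using ccnn Lpos Phi_nonneg[OF om] unfolding It gt_def by auto
    qed auto
    also have "\<dots> = cc * integral (I t) gt" by simp
    also have "\<dots> = 2^k * P * Lambda_pqr p' q' r x m \<omega>"
    proof -
      have "Lambda_pqr p' q' r x m \<omega> = integral (I t) gt / Pt"
        unfolding Lam_eq[OF tQ] It gt_def Nt_def Pt_def by (rule refl)
      then show ?thesis unfolding cc_def by simp
    qed
    also have "\<dots> \<le> 2^k * P * M"
      unfolding M_def using Lam_le_Max[OF tQ] Ppos by (intro mult_left_mono) auto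
    finally show ?thesis .
  qed
  have "D^e * integral {D..d} h = integral {D..d} (\<lambda>v. D^e * h v)" by simp
  also have "\<dots> \<le> integral {D..d} (\<lambda>v. \<Sum>t\<in>T. g t v)"
  proof (rule integral_le)
    show "(\<lambda>v. D^e * h v) integrable_on {D..d}"
      by (rule integrable_continuous_interval, rule hcont) auto
    show "(\<lambda>v. \<Sum>t\<in>T. g t v) integrable_on {D..d}"
      by (rule integrable_sum[OF finT]) (rule gint)
  qed (rule ptw)
  also have "\<dots> = (\<Sum>t\<in>T. integral {D..d} (g t))"
    by (rule integral_sum[OF finT]) (rule gint)
  also have "\<dots> = (\<Sum>t\<in>T. integral (I t \<inter> {D..d}) (\<lambda>v. D^e * h v))"
    unfolding g_def by (simp add: integral_restrict_Int)
  also have "\<dots> \<le> (\<Sum>t\<in>T. 2^k * P * M)"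
    by (rule sum_mono) (rule pert)
  also have "\<dots> = real (card T) * (2^k * P * M)" by simp
  also have "\<dots> \<le> real (k^2) * (2^k * P * M)"
    using cardT Ppos Mnn by (intro mult_right_mono) auto
  finally show ?thesis unfolding D_def d_def e_def k_def P_def M_def h_def by (simp add: algebra_simps)
qed

end

theorem lemma3p2:
  fixes r m :: nat and x :: "nat \<Rightarrow> real" and \<phi> \<omega> :: "real \<Rightarrow> real" and p q :: nat
  assumes "m \<ge> 1" and "m \<ge> r + 1"
    and "\<And>i j. i \<le> j \<Longrightarrow> j \<le> m \<Longrightarrow> x i \<le> x j"
    and "\<And>j. j + r + 1 \<le> m \<Longrightarrow> x j < x (j + r + 1)"
    and "(p, q) \<in> Qset m r" and "q + 2 \<le> m + p"
    and "\<phi> \<in> Phi" and "\<omega> \<in> Phi"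
    and "\<And>t. 0 < t \<Longrightarrow> t \<le> (2 * (x m - x 0)) / 2 \<Longrightarrow>
           \<phi> t \<le> t ^ (m - r - 1) *
             integral {t .. 2 * (x m - x 0)} (\<lambda>u. u powi (- int (m - r)) * \<omega> u)"
  shows "Lambda_pqr p q r x m \<phi> \<le> 2 ^ ((m - r)^2) * Lambda_r r x m \<omega>"
proof -
  interpret cfg r m x using assms(2,3,4) by unfold_locales auto
  have pq: "(p,q) \<in> Qset m r" "q + 2 \<le> m + p" using assms(5,6) .
  have ph: "\<phi> \<in> Phi" and om: "\<omega> \<in> Phi" using assms(7,8) .
  define a where "a = x q - x p"
  define D where "D = dpq x m p q"
  define d where "d = 2*(x m - x 0)"
  define k where "k = m - r"
  define N where "N = q - p - r + 1"
  define e where "e = m - (q-p) - 1"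
  define P where "P = Pd x m p q"
  define M where "M = Lambda_r r x m \<omega>"
  have qm: "p + r + 1 \<le> q" "q \<le> m" using pq by (auto simp: Qset_def)
  have ar: "N + e = k" "e \<ge> 1" "k \<ge> 3" "k - 1 = N + (e - 1)"
    using qm pq unfolding N_def e_def k_def by auto
  have apos: "0 < a" using Q_lt[OF pq(1)] unfolding a_def by auto
  have aD: "a \<le> D" using dpq_ge[OF pq(1)] unfolding a_def D_def .
  have Dm: "D \<le> x m - x 0" using D_le[OF pq] unfolding D_def .
  have Dd: "D \<le> d" using Dm x0m unfolding d_def by auto
  have Ppos: "0 < P" using Pd_pos[OF pq(1)] unfolding P_def .
  have Mnn: "0 \<le> M" using Lam_nonneg[OF pq(1) om] Lam_le_Max[OF pq(1)] unfolding M_def by (meson order_trans)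
  have LwM: "Lambda_pqr p q r x m \<omega> \<le> M" using Lam_le_Max[OF pq(1)] unfolding M_def .
  have fe: "(\<lambda>u. u powi (- int (m - r)) * \<omega> u) = (\<lambda>v. \<omega> v / v^(N+e))"
  proof
    fix u :: real
    show "u powi (- int (m - r)) * \<omega> u = \<omega> u / u^(N+e)"
      unfolding ar(1) k_def power_int_minus power_int_of_nat by (simp add: divide_inverse mult.commute)
  qed
  define F where "F = (\<lambda>u. integral {u..d} (\<lambda>v. \<omega> v / v^(N+e)))"
  have hyp: "\<phi> u \<le> u^(k-1) * F u" if u: "u \<in> {a..D}" for u
    using assms(9)[of u] u apos Dm unfolding F_def fe d_def k_def by auto
  have ftc: "(\<lambda>u. u^(e-1) * F u) integrable_on {a..D} \<and>
    integral {a..D} (\<lambda>u. u^(e-1) * F u)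
      \<le> D^e * integral {D..d} (\<lambda>v. \<omega> v / v^(N+e)) + integral {a..D} (\<lambda>v. \<omega> v / v^N)"
    unfolding F_def
    by (rule ftc_bound[OF apos aD Dd ar(2)])
      (use apos Phi_nonneg[OF om] Phi_cont[OF om] in auto)
  have s4: "D^e * integral {D..d} (\<lambda>v. \<omega> v / v^(N+e)) \<le> real (k^2) * 2^k * P * M"
    using step4[OF pq om] unfolding ar(1) unfolding D_def d_def e_def k_def P_def M_def .
  have Iw: "integral {a..D} (\<lambda>v. \<omega> v / v^N) = P * Lambda_pqr p q r x m \<omega>"
    unfolding Lam_eq[OF pq(1)] a_def D_def N_def P_def using Ppos[unfolded P_def] by simp
  have Iphi: "Lambda_pqr p q r x m \<phi> = integral {a..D} (\<lambda>u. \<phi> u / u^N) / P"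
    unfolding Lam_eq[OF pq(1)] a_def D_def N_def P_def ..
  have "integral {a..D} (\<lambda>u. \<phi> u / u^N) \<le> integral {a..D} (\<lambda>u. u^(e-1) * F u)"
  proof (rule integral_le)
    show "(\<lambda>u. \<phi> u / u^N) integrable_on {a..D}"
      by (rule integrable_continuous_interval, rule cont_div_pow, rule Phi_cont[OF ph])
        (use apos in auto)
    show "(\<lambda>u. u^(e-1) * F u) integrable_on {a..D}" using ftc by blast
    fix u assume u: "u \<in> {a..D}"
    then have upos: "0 < u" using apos by auto
    have "\<phi> u / u^N \<le> u^(k-1) * F u / u^N"
      using hyp[OF u] upos by (intro divide_right_mono) auto
    also have "\<dots> = u^(e-1) * F u"
      unfolding ar(4) power_add using upos by simp
    finally show "\<phi> u / u^N \<le> u^(e-1) * F u" .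
  qed
  also have "\<dots> \<le> real (k^2) * 2^k * P * M + P * M"
    using ftc s4 Iw LwM Ppos by (smt (verit) mult_left_mono)
  finally have "Lambda_pqr p q r x m \<phi> \<le> (real (k^2) * 2^k + 1) * M"
    unfolding Iphi using Ppos by (simp add: divide_le_eq algebra_simps)
  also have "\<dots> \<le> 2^(k^2) * M"
  proof (rule mult_right_mono[OF _ Mnn])
    have "real (k^2 * 2^k + 1) \<le> real (2^(k^2))" using arith_k[OF ar(3)] by linarith
    then show "real (k^2) * 2^k + 1 \<le> 2^(k^2)" by simp
  qed
  finally show ?thesis unfolding k_def M_def .
qed

end
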